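(* Let $S,T$ be spin systems, $\beta>0$, and $\mathcal f:S\to T$ a simulation with cut-off $\Delta>\max(H_T)$, degeneracy $d$ and $m=|\mathrm{enc}|$ encodings. Then $$\|p_{\mathcal f,\beta}-p_{T,\beta}\|<\frac{1}{md}\,q_S^{|V_S|}\,e^{-\beta(\Delta-\min(H_T))}.$$
   Context: A spin system $S=(q_S,V_S,E_S,J_S)$: integer $q_S\ge2$, finite set $V_S$, hyperedges $E_S\subseteq\mathcal P(V_S)$ covering $V_S$, $J_S(e):[q_S]^e\to\mathbb R_{\ge0}$. $\mathcal C_S=[q_S]^{V_S}$, $H_S(\vec s)=\sum_eJ_S(e)(\vec s|_e)$, $Z_S(\beta)=\sum_{\vec s}e^{-\beta H_S(\vec s)}$, Boltzmann distribution $p_{S,\beta}(\vec s)=e^{-\beta H_S(\vec s)}/Z_S(\beta)$. Total variation distance $\|p-q\|=\frac12\sum_x|p(x)-q(x)|$. A simulation $\mathcal f:S\to T$ consists of a cut-off $\Delta>0$, shift $\Gamma\in\mathbb R$, degeneracy $d\in\mathbb N$, $P:V_T\to V_S^k$ (components $P^{(i)}$), $\mathrm{dec}:[q_S]^k\to[q_T]$, and $\mathrm{enc}=(\mathrm{enc}_i:[q_T]\to[q_S]^k)_{i=1,\dots,m}$, satisfying: (1) $P^{(i)}(v)=P^{(j)}(w)\Rightarrow i=j,\ v=w$; (2) $\mathrm{dec}\circ\mathrm{enc}_i=\mathrm{id}$; (3) $\mathrm{enc}_i(t)=\mathrm{enc}_j(t)$ for some $t$ implies $i=j$; (4) with $\mathrm{sim}_i(\vec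 t)=\{\vec s\in\mathcal C_S:\vec s\circ P=\mathrm{enc}_i\circ\vec t,\ H_S(\vec s)-\Gamma<\Delta\}$, $|\mathrm{sim}_i(\vec t)|=d$ whenever $H_T(\vec t)<\Delta$; (5) $H_S(\vec s)-\Gamma=H_T(\vec t)$ for $\vec s\in\bigcup_i\mathrm{sim}_i(\vec t)$, and $H_S(\vec s)-\Gamma\ge\Delta$ for every $\vec s$ in no $\mathrm{sim}_i(\vec t)$. Here $(\vec s\circ P)(v)=(\vec s(P^{(1)}(v)),\dots,\vec s(P^{(k)}(v)))$, $(\mathrm{enc}_i\circ\vec t)(v)=\mathrm{enc}_i(\vec t(v))$, and $\mathrm{dec}\circ\vec s\circ P\in\mathcal C_T$. The simulation distribution is the probability distribution on $\mathcal C_T$ given by $p_{\mathcal f,\beta}(\vec t)=\sum_{\vec s\in\mathcal C_S:\ \mathrm{dec}\circ\vec s\circ P=\vec t}p_{S,\beta}(\vec s)$. *)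

theory Defs
  imports Main "HOL-Library.FuncSet" Complex_Main
begin

text \<open>Spin values [q] are represented as {..<q} (i.e. 0,...,q-1).
 Configurations are extensional functions V \<rightarrow> {..<q}; k-tuples are
 extensional functions {..<k} \<rightarrow> {..<q}.\<close>

record 'v spin_system =
  sq :: nat
  sV :: "'v set"
  sE :: "'v set set"
  sJ :: "'v set \<Rightarrow> ('v \<Rightarrow> nat) \<Rightarrow> real"

definition spin_system :: "'v spin_system \<Rightarrow> bool" where
  "spin_system S \<longleftrightarrow> sq S \<ge> 2 \<and> finite (sV S) \<and> sE S \<subseteq> Pow (sV S)
     \<and> \<Union>(sE S) = sV S
     \<and> (\<forall>e\<in>sE S. \<forall>x\<in>(e \<rightarrow>\<^sub>E {..<sq S}). sJ S e x \<ge> 0)"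

definition configs :: "'v spin_system \<Rightarrow> ('v \<Rightarrow> nat) set" where
  "configs S = sV S \<rightarrow>\<^sub>E {..<sq S}"

definition hamiltonian :: "'v spin_system \<Rightarrow> ('v \<Rightarrow> nat) \<Rightarrow> real" where
  "hamiltonian S s = (\<Sum>e\<in>sE S. sJ S e (restrict s e))"

definition partition_fn :: "'v spin_system \<Rightarrow> real \<Rightarrow> real" where
  "partition_fn S \<beta> = (\<Sum>s\<in>configs S. exp (- \<beta> * hamiltonian S s))"

definition boltzmann :: "'v spin_system \<Rightarrow> real \<Rightarrow> ('v \<Rightarrow> nat) \<Rightarrow> real" where
  "boltzmann S \<beta> s = exp (- \<beta> * hamiltonian S s) / partition_fn S \<beta>"

definition tv_dist :: "'x set \<Rightarrow> ('x \<Rightarrow> real) \<Rightarrow> ('x \<Rightarrow> real) \<Rightarrow> real" where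
  "tv_dist X p p' = (1/2) * (\<Sum>x\<in>X. \<bar>p x - p' x\<bar>)"

text \<open>A simulation f : S \<rightarrow> T. P v l is the l-th component P^(l)(v) (l < k);
 enc i is the (i+1)-th encoding (i < m).\<close>
record ('a, 'b) simulation =
  cutoff :: real
  shift :: real
  degen :: nat
  arity :: nat
  proj :: "'b \<Rightarrow> nat \<Rightarrow> 'a"
  dec :: "(nat \<Rightarrow> nat) \<Rightarrow> nat"
  nenc :: nat
  enc :: "nat \<Rightarrow> nat \<Rightarrow> (nat \<Rightarrow> nat)"

definition tuples :: "'a spin_system \<Rightarrow> ('a, 'b) simulation \<Rightarrow> (nat \<Rightarrow> nat) set" where
  "tuples S f = {..<arity f} \<rightarrow>\<^sub>E {..<sq S}"

definition compP :: "'b spin_system \<Rightarrow> ('a, 'b) simulation \<Rightarrow> ('a \<Rightarrow> nat) \<Rightarrow> ('b \<Rightarrow> (nat \<Rightarrow> nat))" where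
  "compP T f s = (\<lambda>v\<in>sV T. (\<lambda>l\<in>{..<arity f}. s (proj f v l)))"

definition simset :: "'a spin_system \<Rightarrow> 'b spin_system \<Rightarrow> ('a, 'b) simulation
    \<Rightarrow> nat \<Rightarrow> ('b \<Rightarrow> nat) \<Rightarrow> ('a \<Rightarrow> nat) set" where
  "simset S T f i t = {s\<in>configs S. compP T f s = (\<lambda>v\<in>sV T. enc f i (t v))
       \<and> hamiltonian S s - shift f < cutoff f}"

definition is_simulation :: "'a spin_system \<Rightarrow> 'b spin_system \<Rightarrow> ('a, 'b) simulation \<Rightarrow> bool" where
  "is_simulation S T f \<longleftrightarrow>
     cutoff f > 0 \<and> degen f \<ge> 1 \<and> nenc f \<ge> 1
   \<and> (\<forall>v\<in>sV T. \<forall>l<arity f. proj f v l \<in> sV S)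
   \<and> (\<forall>x\<in>tuples S f. dec f x < sq T)
   \<and> (\<forall>i<nenc f. \<forall>t<sq T. enc f i t \<in> tuples S f)
   \<and> (\<forall>v\<in>sV T. \<forall>w\<in>sV T. \<forall>i<arity f. \<forall>j<arity f.
        proj f v i = proj f w j \<longrightarrow> i = j \<and> v = w)
   \<and> (\<forall>i<nenc f. \<forall>t<sq T. dec f (enc f i t) = t)
   \<and> (\<forall>i<nenc f. \<forall>j<nenc f. \<forall>t<sq T. enc f i t = enc f j t \<longrightarrow> i = j)
   \<and> (\<forall>i<nenc f. \<forall>t\<in>configs T. hamiltonian T t < cutoff f
        \<longrightarrow> card (simset S T f i t) = degen f)
   \<and> (\<forall>i<nenc f. \<forall>t\<in>configs T. \<forall>s\<in>simset S T f i t.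
        hamiltonian S s - shift f = hamiltonian T t)
   \<and> (\<forall>s\<in>configs S. (\<forall>i<nenc f. \<forall>t\<in>configs T. s \<notin> simset S T f i t)
        \<longrightarrow> hamiltonian S s - shift f \<ge> cutoff f)"

definition decode :: "'b spin_system \<Rightarrow> ('a, 'b) simulation \<Rightarrow> ('a \<Rightarrow> nat) \<Rightarrow> ('b \<Rightarrow> nat)" where
  "decode T f s = (\<lambda>v\<in>sV T. dec f (compP T f s v))"

definition sim_dist :: "'a spin_system \<Rightarrow> 'b spin_system \<Rightarrow> ('a, 'b) simulation
    \<Rightarrow> real \<Rightarrow> ('b \<Rightarrow> nat) \<Rightarrow> real" where
  "sim_dist S T f \<beta> t = (\<Sum>s\<in>{s\<in>configs S. decode T f s = t}. boltzmann S \<beta> s)"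

end

theory Submission
  imports Defs
begin

lemma tv_abstract:
  fixes w :: "'x \<Rightarrow> real" and h :: "'y \<Rightarrow> real"
  assumes X: "finite X" and Y: "finite Y" and gXY: "g ` X \<subseteq> Y" and GX: "G \<subseteq> X"
    and w0: "\<forall>x\<in>X. w x \<ge> 0" and h0: "\<forall>y\<in>Y. h y \<ge> 0" and K: "K > 0"
    and Zd: "Z = sum h Y" and Z: "Z > 0"
    and fib: "\<forall>y\<in>Y. sum w {x\<in>G. g x = y} = K * h y"
  shows "sum w X = K*Z + sum w (X - G)"
    and "(1/2) * (\<Sum>y\<in>Y. \<bar>sum w {x\<in>X. g x = y} / sum w X - h y / Z\<bar>) \<le> sum w (X-G) / sum w X"
proof -
  define B where "B = sum w (X - G)"
  have B0: "B \<ge> 0" unfolding B_def using w0 by (intro sum_nonneg) auto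
  have G: "finite G" using X GX finite_subset by blast
  have "sum w G = (\<Sum>y\<in>Y. sum w {x\<in>G. g x = y})"
    using sum.group[OF G Y, of g w] gXY GX by (metis image_mono subset_trans)
  also have "\<dots> = (\<Sum>y\<in>Y. K * h y)" using fib by simp
  also have "\<dots> = K * Z" using Zd by (simp add: sum_distrib_left)
  finally have sG: "sum w G = K * Z" .
  have "sum w X = sum w G + B" unfolding B_def
    using sum.subset_diff[OF GX X, of w] by simp
  then have sX: "sum w X = K * Z + B" using sG by simp
  then show "sum w X = K*Z + sum w (X - G)" by (simp add: B_def)
  define By where "By y = sum w {x\<in>X-G. g x = y}" for y
  have sBy: "(\<Sum>y\<in>Y. By y) = B" unfolding By_def B_def
    using sum.group[of "X-G" Y g w] X Y gXY by auto
  have By0: "By y \<ge> 0" for y unfolding By_def using w0 by (intro sum_nonneg) auto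
  have spl: "sum w {x\<in>X. g x = y} = sum w {x\<in>G. g x = y} + By y" for y
  proof -
    have "{x\<in>X. g x = y} = {x\<in>G. g x = y} \<union> {x\<in>X-G. g x = y}" using GX by auto
    moreover have "finite {x\<in>X. g x = y}" using X by auto
    ultimately show ?thesis unfolding By_def
      by (subst sum.union_disjoint[symmetric]) (auto intro: finite_subset[OF _ X])
  qed
  have KZB: "K * Z + B > 0" using K Z B0 by (simp add: add_pos_nonneg)
  have trm: "\<bar>sum w {x\<in>X. g x = y} / sum w X - h y / Z\<bar> \<le> (By y + h y * B / Z) / (K*Z+B)"
    if y: "y \<in> Y" for y
  proof -
    have "sum w {x\<in>X. g x = y} / sum w X - h y / Z = (K * h y + By y)/(K*Z+B) - h y / Z"
      using spl[of y] fib y sX by simp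
    also have "\<dots> = (By y - h y * B / Z) / (K*Z+B)"
      using KZB Z by (simp add: field_simps)
    finally have e: "sum w {x\<in>X. g x = y} / sum w X - h y / Z = (By y - h y * B / Z) / (K*Z+B)" .
    have "\<bar>By y - h y * B / Z\<bar> \<le> By y + h y * B / Z"
      using By0[of y] h0 y B0 Z by (intro abs_leI) (auto simp: divide_nonneg_pos)
    then have "\<bar>By y - h y * B / Z\<bar> / (K*Z+B) \<le> (By y + h y * B / Z) / (K*Z+B)"
      using KZB by (intro divide_right_mono) auto
    moreover have "\<bar>(By y - h y * B / Z) / (K*Z+B)\<bar> = \<bar>By y - h y * B / Z\<bar> / (K*Z+B)"
      by (rule abs_div_pos[OF KZB, symmetric])
    ultimately show ?thesis unfolding e by linarith
  qed
  have "(\<Sum>y\<in>Y. \<bar>sum w {x\<in>X. g x = y} / sum w X - h y / Z\<bar>) \<le> (\<Sum>y\<in>Y. (By y + h y * B / Z) / (K*Z+B))"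
    using trm by (intro sum_mono) auto
  also have "\<dots> = ((\<Sum>y\<in>Y. By y) + (\<Sum>y\<in>Y. h y) * B / Z) / (K*Z+B)"
    by (simp add: sum_divide_distrib[symmetric] sum.distrib sum_distrib_right)
  also have "\<dots> = 2 * B / (K*Z+B)" using sBy Zd Z by simp
  finally have fin: "(\<Sum>y\<in>Y. \<bar>sum w {x\<in>X. g x = y} / sum w X - h y / Z\<bar>) \<le> 2 * B / (K*Z+B)" .
  have e1: "sum w (X-G) / sum w X = B / (K*Z+B)" using sX B_def by simp
  have e2: "2 * B / (K*Z+B) = 2 * (B / (K*Z+B))" by simp
  show "(1/2) * (\<Sum>y\<in>Y. \<bar>sum w {x\<in>X. g x = y} / sum w X - h y / Z\<bar>) \<le> sum w (X-G) / sum w X"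
    unfolding e1 using fin e2 by linarith
qed


lemma configs_facts:
  assumes "spin_system S"
  shows "finite (configs S)" "configs S \<noteq> {}" "card (configs S) = sq S ^ card (sV S)"
proof -
  have fin: "finite (sV S)" and q: "sq S \<ge> 2" using assms unfolding spin_system_def by auto
  show "finite (configs S)" unfolding configs_def using fin by (simp add: finite_PiE)
  show "configs S \<noteq> {}" unfolding configs_def using q by (auto simp: PiE_eq_empty_iff lessThan_empty_iff)
  show "card (configs S) = sq S ^ card (sV S)" unfolding configs_def using fin
    by (simp add: card_PiE prod_constant)
qed

lemma simD:
  assumes "is_simulation S T f"
  shows "degen f \<ge> 1" "nenc f \<ge> 1"
  "\<And>v l. v\<in>sV T \<Longrightarrow> l<arity f \<Longrightarrow> proj f v l \<in> sV S"
  "\<And>x. x\<in>tuples S f \<Longrightarrow> dec f x < sq T"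
  "\<And>i t. i<nenc f \<Longrightarrow> t<sq T \<Longrightarrow> dec f (enc f i t) = t"
  "\<And>i j t. i<nenc f \<Longrightarrow> j<nenc f \<Longrightarrow> t<sq T \<Longrightarrow> enc f i t = enc f j t \<Longrightarrow> i = j"
  "\<And>i t. i<nenc f \<Longrightarrow> t\<in>configs T \<Longrightarrow> hamiltonian T t < cutoff f \<Longrightarrow> card (simset S T f i t) = degen f"
  "\<And>i t s. i<nenc f \<Longrightarrow> t\<in>configs T \<Longrightarrow> s\<in>simset S T f i t \<Longrightarrow> hamiltonian S s - shift f = hamiltonian T t"
  "\<And>s. s\<in>configs S \<Longrightarrow> (\<forall>i<nenc f. \<forall>t\<in>configs T. s \<notin> simset S T f i t) \<Longrightarrow> hamiltonian S s - shift f \<ge> cutoff f"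
  using assms unfolding is_simulation_def by blast+

lemma decode_in:
  assumes "is_simulation S T f" "s \<in> configs S"
  shows "decode T f s \<in> configs T"
proof -
  have "compP T f s v \<in> tuples S f" if "v \<in> sV T" for v
    using assms(2) simD(3)[OF assms(1) that] that unfolding compP_def tuples_def configs_def
    by (auto simp: PiE_iff)
  then show ?thesis using simD(4)[OF assms(1)] unfolding decode_def configs_def by auto
qed

lemma decode_simset:
  assumes "is_simulation S T f" "i < nenc f" "t \<in> configs T" "s \<in> simset S T f i t"
  shows "decode T f s = t"
proof
  fix v show "decode T f s v = t v"
  proof (cases "v \<in> sV T")
    case True
    have "compP T f s v = enc f i (t v)" using assms(4) True unfolding simset_def by (auto dest: fun_cong[of _ _ v])
    moreover have "t v < sq T" using assms(3) True unfolding configs_def by auto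
    ultimately show ?thesis using simD(5)[OF assms(1,2)] True unfolding decode_def by auto
  next
    case False
    then show ?thesis using assms(3) unfolding decode_def configs_def by auto
  qed
qed


lemma fiber_sum:
  assumes S: "spin_system S" and T: "spin_system T" and sim: "is_simulation S T f"
    and cut: "cutoff f > Max (hamiltonian T ` configs T)"
    and ne: "sV T \<noteq> {}" and t: "t \<in> configs T"
  shows "sum (\<lambda>s. exp (- \<beta> * hamiltonian S s))
           {s\<in>{s\<in>configs S. \<exists>i<nenc f. \<exists>t\<in>configs T. s \<in> simset S T f i t}. decode T f s = t}
         = real (nenc f) * real (degen f) * exp (- \<beta> * shift f) * exp (- \<beta> * hamiltonian T t)"
proof -
  let ?w = "\<lambda>s. exp (- \<beta> * hamiltonian S s)"
  have eq: "{s\<in>{s\<in>configs S. \<exists>i<nenc f. \<exists>t\<in>configs T. s \<in> simset S T f i t}. decode T f s = t}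
        = (\<Union>i\<in>{..<nenc f}. simset S T f i t)"
  proof (rule set_eqI, rule iffI)
    fix s assume "s \<in> {s\<in>{s\<in>configs S. \<exists>i<nenc f. \<exists>t\<in>configs T. s \<in> simset S T f i t}. decode T f s = t}"
    then obtain i t' where "i < nenc f" "t' \<in> configs T" "s \<in> simset S T f i t'" "decode T f s = t" by auto
    moreover then have "decode T f s = t'" using decode_simset[OF sim] by blast
    ultimately show "s \<in> (\<Union>i\<in>{..<nenc f}. simset S T f i t)" by auto
  next
    fix s assume "s \<in> (\<Union>i\<in>{..<nenc f}. simset S T f i t)"
    then obtain i where "i < nenc f" "s \<in> simset S T f i t" by auto
    moreover then have "decode T f s = t" using decode_simset[OF sim _ t] by blast
    moreover have "s \<in> configs S" using \<open>s \<in> simset S T f i t\<close> unfolding simset_def by auto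
    ultimately show "s \<in> {s\<in>{s\<in>configs S. \<exists>i<nenc f. \<exists>t\<in>configs T. s \<in> simset S T f i t}. decode T f s = t}"
      using t by auto
  qed
  have finS: "finite (configs S)" using configs_facts[OF S] by simp
  have fin: "finite (simset S T f i t)" for i
    using finS unfolding simset_def by auto
  obtain v where v: "v \<in> sV T" using ne by auto
  have disj: "simset S T f i t \<inter> simset S T f j t = {}" if "i < nenc f" "j < nenc f" "i \<noteq> j" for i j
  proof (rule ccontr)
    assume "simset S T f i t \<inter> simset S T f j t \<noteq> {}"
    then obtain s where "s \<in> simset S T f i t" "s \<in> simset S T f j t" by auto
    then have "(\<lambda>v\<in>sV T. enc f i (t v)) = (\<lambda>v\<in>sV T. enc f j (t v))" unfolding simset_def by auto
    then have "enc f i (t v) = enc f j (t v)" using v by (auto dest: fun_cong[of _ _ v])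
    moreover have "t v < sq T" using t v unfolding configs_def by auto
    ultimately show False using simD(6)[OF sim] that by blast
  qed
  have Ht: "hamiltonian T t < cutoff f"
    using cut t configs_facts[OF T] by (meson Max_ge finite_imageI image_eqI le_less_trans)
  have each: "sum ?w (simset S T f i t) = real (degen f) * (exp (- \<beta> * shift f) * exp (- \<beta> * hamiltonian T t))"
    if i: "i < nenc f" for i
  proof -
    have "sum ?w (simset S T f i t) = sum (\<lambda>s. exp (- \<beta> * shift f) * exp (- \<beta> * hamiltonian T t)) (simset S T f i t)"
    proof (rule sum.cong[OF refl])
      fix s assume "s \<in> simset S T f i t"
      then have "hamiltonian S s = shift f + hamiltonian T t" using simD(8)[OF sim i t] by force
      then show "?w s = exp (- \<beta> * shift f) * exp (- \<beta> * hamiltonian T t)"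
        by (simp add: distrib_left exp_add[symmetric])
    qed
    also have "\<dots> = real (card (simset S T f i t)) * (exp (- \<beta> * shift f) * exp (- \<beta> * hamiltonian T t))" by simp
    also have "card (simset S T f i t) = degen f" using simD(7)[OF sim i t Ht] .
    finally show ?thesis .
  qed
  have "sum ?w (\<Union>i\<in>{..<nenc f}. simset S T f i t) = (\<Sum>i<nenc f. sum ?w (simset S T f i t))"
    using fin disj by (intro sum.UNION_disjoint) auto
  also have "\<dots> = (\<Sum>i<nenc f. real (degen f) * (exp (- \<beta> * shift f) * exp (- \<beta> * hamiltonian T t)))"
    using each by simp
  finally show ?thesis unfolding eq by simp
qed


theorem mainTheorem14:
  fixes S :: "'a spin_system" and T :: "'b spin_system"
    and f :: "('a, 'b) simulation" and \<beta> :: real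
  assumes "spin_system S" and "spin_system T" and "\<beta> > 0"
    and "is_simulation S T f"
    and "cutoff f > Max (hamiltonian T ` configs T)"
  shows "tv_dist (configs T) (sim_dist S T f \<beta>) (boltzmann T \<beta>)
     < 1 / (real (nenc f) * real (degen f)) * real (sq S) ^ card (sV S)
       * exp (- \<beta> * (cutoff f - Min (hamiltonian T ` configs T)))"
proof -
  note S = assms(1) and T = assms(2) and bpos = assms(3) and sim = assms(4) and cut = assms(5)
  let ?w = "\<lambda>s. exp (- \<beta> * hamiltonian S s)"
  let ?h = "\<lambda>t. exp (- \<beta> * hamiltonian T t)"
  let ?CS = "configs S" and ?CT = "configs T"
  let ?RHS = "1 / (real (nenc f) * real (degen f)) * real (sq S) ^ card (sV S)
       * exp (- \<beta> * (cutoff f - Min (hamiltonian T ` configs T)))"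
  have m1: "nenc f \<ge> 1" and d1: "degen f \<ge> 1" using simD(1,2)[OF sim] by auto
  have q2: "sq S \<ge> 2" using S unfolding spin_system_def by auto
  have RHSpos: "?RHS > 0" using m1 d1 q2 by simp
  have finS: "finite ?CS" and neS: "?CS \<noteq> {}" and cardS: "card ?CS = sq S ^ card (sV S)"
    using configs_facts[OF S] by auto
  have finT: "finite ?CT" and neT: "?CT \<noteq> {}" using configs_facts[OF T] by auto
  have ZS: "partition_fn S \<beta> = sum ?w ?CS" unfolding partition_fn_def by simp
  have ZSpos: "sum ?w ?CS > 0" using finS neS by (intro sum_pos) auto
  have simd: "sim_dist S T f \<beta> t = sum ?w {s\<in>?CS. decode T f s = t} / sum ?w ?CS" for t
    unfolding sim_dist_def boltzmann_def ZS by (simp add: sum_divide_distrib)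
  show ?thesis
  proof (cases "sV T = {}")
    case True
    define t0 :: "'b \<Rightarrow> nat" where "t0 = (\<lambda>_. undefined)"
    have CT: "?CT = {t0}" unfolding configs_def True t0_def by simp
    have dec: "decode T f s = t0" for s unfolding decode_def True t0_def by auto
    have "sim_dist S T f \<beta> t0 = 1" unfolding simd dec using ZSpos by simp
    moreover have "boltzmann T \<beta> t0 = 1" unfolding boltzmann_def partition_fn_def CT by simp
    ultimately have "tv_dist ?CT (sim_dist S T f \<beta>) (boltzmann T \<beta>) = 0"
      unfolding tv_dist_def CT by simp
    then show ?thesis using RHSpos by simp
  next
    case False
    define G where "G = {s\<in>?CS. \<exists>i<nenc f. \<exists>t\<in>?CT. s \<in> simset S T f i t}"
    define K where "K = real (nenc f) * real (degen f) * exp (- \<beta> * shift f)"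
    define Z where "Z = partition_fn T \<beta>"
    define B where "B = sum ?w (?CS - G)"
    have Kpos: "K > 0" unfolding K_def using m1 d1 by simp
    have Zd: "Z = sum ?h ?CT" unfolding Z_def partition_fn_def by simp
    have Zpos: "Z > 0" unfolding Zd using finT neT by (intro sum_pos) auto
    have fib: "\<forall>y\<in>?CT. sum ?w {x\<in>G. decode T f x = y} = K * ?h y"
      using fiber_sum[OF S T sim cut False] unfolding G_def K_def by simp
    have gXY: "decode T f ` ?CS \<subseteq> ?CT" using decode_in[OF sim] by auto
    have GX: "G \<subseteq> ?CS" unfolding G_def by auto
    note ab = tv_abstract[OF finS finT gXY GX _ _ Kpos Zd Zpos fib]
    have sX: "sum ?w ?CS = K * Z + B" using ab(1) B_def by simp
    have tv0: "tv_dist ?CT (sim_dist S T f \<beta>) (boltzmann T \<beta>) =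
      (1/2) * (\<Sum>y\<in>?CT. \<bar>sum ?w {x\<in>?CS. decode T f x = y} / sum ?w ?CS - ?h y / Z\<bar>)"
      unfolding tv_dist_def simd boltzmann_def Z_def by simp
    have tv: "tv_dist ?CT (sim_dist S T f \<beta>) (boltzmann T \<beta>) \<le> B / (K * Z + B)"
      unfolding tv0 using ab(2) sX B_def by simp
    have B0: "B \<ge> 0" unfolding B_def by (intro sum_nonneg) auto
    define N where "N = card (?CS - G)"
    define E where "E = exp (- \<beta> * (shift f + cutoff f))"
    have bad: "?w s \<le> E" if "s \<in> ?CS - G" for s
    proof -
      have "\<forall>i<nenc f. \<forall>t\<in>?CT. s \<notin> simset S T f i t" using that unfolding G_def by auto
      then have "hamiltonian S s - shift f \<ge> cutoff f" using simD(9)[OF sim] that by auto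
      then have "- \<beta> * hamiltonian S s \<le> - \<beta> * (shift f + cutoff f)" using bpos
        by (simp add: mult_left_mono)
      then show ?thesis unfolding E_def by simp
    qed
    have BNE: "B \<le> real N * E" unfolding B_def N_def using bad by (rule sum_bounded_above)
    obtain t1 where t1: "t1 \<in> ?CT" using neT by auto
    have Ht1: "hamiltonian T t1 < cutoff f"
      using cut t1 finT by (meson Max_ge finite_imageI image_eqI le_less_trans)
    have "card (simset S T f 0 t1) = degen f" using simD(7)[OF sim _ t1 Ht1] m1 by auto
    then have "simset S T f 0 t1 \<noteq> {}" using d1 by auto
    then obtain s1 where "s1 \<in> simset S T f 0 t1" by blast
    moreover then have "s1 \<in> ?CS" unfolding simset_def by auto
    moreover have "0 < nenc f" using m1 by simp
    ultimately have "s1 \<in> G" using t1 unfolding G_def by blast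
    then have "?CS - G \<subset> ?CS" using GX by auto
    then have "N < card ?CS" unfolding N_def using finS by (intro psubset_card_mono)
    then have Nlt: "real N < real (sq S) ^ card (sV S)" using cardS by (simp flip: of_nat_power)
    obtain t2 where t2: "t2 \<in> ?CT" "Min (hamiltonian T ` ?CT) = hamiltonian T t2"
    proof -
      have "Min (hamiltonian T ` ?CT) \<in> hamiltonian T ` ?CT"
        using finT neT by (intro Min_in) auto
      then show ?thesis using that by auto
    qed
    have Zge: "Z \<ge> ?h t2" unfolding Zd using finT t2 by (intro member_le_sum) auto
    have Epos: "E > 0" unfolding E_def by simp
    have KZp: "K * Z > 0" using Kpos Zpos by simp
    have "B / (K * Z + B) \<le> B / (K * Z)" using B0 KZp
      by (intro divide_left_mono) (auto intro: mult_pos_pos)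
    also have "\<dots> \<le> real N * E / (K * Z)" using BNE Kpos Zpos by (intro divide_right_mono) auto
    also have "\<dots> \<le> real N * E / (K * ?h t2)"
    proof (rule divide_left_mono)
      show "K * ?h t2 \<le> K * Z" using Kpos Zge by (intro mult_left_mono) auto
      show "0 \<le> real N * E" using Epos by simp
      have "K * ?h t2 > 0" using Kpos by simp
      then show "0 < K * Z * (K * ?h t2)" by (rule mult_pos_pos[OF KZp])
    qed
    also have "\<dots> < real (sq S) ^ card (sV S) * E / (K * ?h t2)" using Nlt Epos Kpos
      by (intro divide_strict_right_mono mult_strict_right_mono) auto
    also have "\<dots> = ?RHS"
    proof -
      have "E = exp (- \<beta> * shift f) * exp (- \<beta> * (cutoff f - hamiltonian T t2)) * ?h t2"
        unfolding E_def by (simp add: exp_add[symmetric] algebra_simps)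
      then show ?thesis unfolding K_def t2(2) using m1 d1 by (simp add: field_simps)
    qed
    finally show ?thesis using tv by linarith
  qed
qed

end
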